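(* Let $\alpha>1$ and let $h_0\ge0$ be an integer. Let $D_0=[-\lceil h_0^\alpha\rceil,\lceil h_0^\alpha\rceil]\times[0,h_0]$, $U_{h_0}=\{x\in\mathbb{H}:\ |x_1|\ge\lceil h_0^\alpha\rceil,\ x_2\le|x_1|^{1/\alpha}\}$, $\hat W=D_0\cup U_{h_0}$, and $\xi_0=(0,h_0)$. Then there is a constant $c>0$ such that for all sufficiently large $k$, $$P_{\xi_0}\big(\tau_{L_{2^k}}<\tau_{\hat W}\big)\ge c\,2^{-k}\qquad\text{and}\qquad \bar{\mathcal H}_{\hat W,N}(\xi_0)\ge c\ \text{ for all sufficiently large } N.$$
   Context: $\mathbb{H}=\{(x_1,x_2)\in\mathbb{Z}^2:\ x_2\ge 0\}$ and $L_n=\{(x_1,n):x_1\in\mathbb{Z}\}$. $(S_n)_{n\ge0}$ is a simple random walk on $\mathbb{Z}^2$; $P_z$ denotes its law started at $z$. For $A\subset\mathbb{Z}^2$, $\bar\tau_A=\min\{n\ge0: S_n\in A\}$ and $\tau_A=\min\{n\ge1:S_n\in A\}$. For $A\subset\mathbb{H}$, $x\in A$ and $N\ge1$, define $$\bar{\mathcal H}_{A,N}(x)=\sum_{z\in L_N\setminus A}P_z\big(S_{\bar\tau_{A\cup L_0}}=x\big).$$ Integer intervals $[a,b]$ denote $\{a,a+1,\dots,b\}$. *)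

theory Defs
  imports "HOL-Probability.Probability"
begin

type_synonym pt = "int \<times> int"

definition srw_step :: "pt pmf" where
  "srw_step = pmf_of_set {(1,0), (-1,0), (0,1), (0,-1)}"

definition SRW :: "pt stream measure" where
  "SRW = stream_space (measure_pmf srw_step)"

definition walk :: "pt \<Rightarrow> pt stream \<Rightarrow> nat \<Rightarrow> pt" where
  "walk z \<omega> n = (fst z + (\<Sum>i<n. fst (\<omega> !! i)), snd z + (\<Sum>i<n. snd (\<omega> !! i)))"

definition Hplane :: "pt set" where
  "Hplane = {x. snd x \<ge> 0}"

definition line :: "int \<Rightarrow> pt set" where
  "line n = {x. snd x = n}"

text \<open>P_z(tau_B < tau_A), with tau the first hitting times at times n >= 1.\<close>
definition hit_before :: "pt \<Rightarrow> pt set \<Rightarrow> pt set \<Rightarrow> real" where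
  "hit_before z B A = measure SRW
     {\<omega> \<in> space SRW. \<exists>n\<ge>1. walk z \<omega> n \<in> B \<and> (\<forall>m. 1 \<le> m \<and> m \<le> n \<longrightarrow> walk z \<omega> m \<notin> A)}"

text \<open>P_z(S at bar-tau_A (times n >= 0) equals x).\<close>
definition hit_at :: "pt \<Rightarrow> pt set \<Rightarrow> pt \<Rightarrow> ennreal" where
  "hit_at z A x = emeasure SRW
     {\<omega> \<in> space SRW. \<exists>n. walk z \<omega> n = x \<and> (\<forall>m<n. walk z \<omega> m \<notin> A)}"

definition Hbar :: "pt set \<Rightarrow> int \<Rightarrow> pt \<Rightarrow> ennreal" where
  "Hbar A N x = (\<Sum>\<^sub>\<infinity> z \<in> line N - A. hit_at z (A \<union> line 0) x)"

definition D0 :: "real \<Rightarrow> nat \<Rightarrow> pt set" where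
  "D0 \<alpha> h0 = {x. \<bar>fst x\<bar> \<le> \<lceil>real h0 powr \<alpha>\<rceil> \<and> 0 \<le> snd x \<and> snd x \<le> int h0}"

definition U :: "real \<Rightarrow> nat \<Rightarrow> pt set" where
  "U \<alpha> h0 = {x \<in> Hplane. \<bar>fst x\<bar> \<ge> \<lceil>real h0 powr \<alpha>\<rceil> \<and>
        real_of_int (snd x) \<le> real_of_int \<bar>fst x\<bar> powr (1 / \<alpha>)}"

definition What :: "real \<Rightarrow> nat \<Rightarrow> pt set" where
  "What \<alpha> h0 = D0 \<alpha> h0 \<union> U \<alpha> h0"

end

theory Submission
  imports Defs
begin

lemma space_SRW[simp]: "space SRW = UNIV"
  by (simp add: SRW_def space_stream_space)

lemma prob_SRW: "prob_space SRW"
  unfolding SRW_def by (rule prob_space.prob_space_stream_space[OF prob_space_measure_pmf])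

lemma walk_0[simp]: "walk z \<omega> 0 = z"
  by (simp add: walk_def)

lemma walk_Cons: "walk z (s ## \<omega>) (Suc n) = walk (fst z + fst s, snd z + snd s) \<omega> n"
  by (simp add: walk_def sum.lessThan_Suc_shift del: sum.lessThan_Suc)

lemma walk_stake: "walk z \<omega> n = (fst z + sum_list (map fst (stake n \<omega>)), snd z + sum_list (map snd (stake n \<omega>)))"
  by (induct n) (auto simp: walk_def stake_Suc simp del: stake.simps(2))

lemma walk_meas[measurable]: "(\<lambda>\<omega>. walk z \<omega> n) \<in> measurable SRW (count_space UNIV)"
proof -
  have "stake n \<in> measurable (stream_space (count_space UNIV)) (count_space (UNIV :: pt list set))"
    by measurable
  hence "stake n \<in> measurable SRW (count_space (UNIV :: pt list set))"
    unfolding SRW_def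
    by (subst measurable_cong_sets[OF sets_stream_space_cong[OF sets_measure_pmf_count_space] refl]) 
  thus ?thesis unfolding walk_stake by measurable
qed

interpretation S: prob_space SRW by (rule prob_SRW)

lemma Cons_meas: "{\<omega>. t ## \<omega> \<in> X} \<in> sets SRW" if "X \<in> sets SRW"
proof -
  have "(\<lambda>\<omega>. t ## \<omega>) \<in> measurable SRW SRW"
    unfolding SRW_def by measurable
  from measurable_sets[OF this that] show ?thesis by (simp add: vimage_def)
qed

lemma SRW_step:
  assumes X: "X \<in> sets SRW"
  shows "measure SRW X = (measure SRW {\<omega>. (1,0) ## \<omega> \<in> X} + measure SRW {\<omega>. (-1,0) ## \<omega> \<in> X}
     + measure SRW {\<omega>. (0,1) ## \<omega> \<in> X} + measure SRW {\<omega>. (0,-1) ## \<omega> \<in> X}) / 4"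
proof -
  let ?S = "{(1,0), (-1,0), (0,1), (0,-1)} :: pt set"
  let ?g = "\<lambda>t. emeasure SRW {\<omega>. t ## \<omega> \<in> X}"
  have "emeasure SRW X = (\<integral>\<^sup>+t. emeasure (stream_space (measure_pmf srw_step)) {x\<in>space (stream_space (measure_pmf srw_step)). t ## x \<in> X } \<partial>measure_pmf srw_step)"
    using X unfolding SRW_def by (rule prob_space.emeasure_stream_space[OF prob_space_measure_pmf])
  also have "\<dots> = (\<integral>\<^sup>+t. ?g t \<partial>measure_pmf srw_step)"
    by (simp add: SRW_def[symmetric])
  also have "\<dots> = sum ?g ?S / card ?S"
    unfolding srw_step_def by (rule nn_integral_pmf_of_set) auto
  also have "\<dots> = (?g (1,0) + ?g (-1,0) + ?g (0,1) + ?g (0,-1)) / 4"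
    by (simp add: add.assoc)
  finally have "emeasure SRW X = (?g (1,0) + ?g (-1,0) + ?g (0,1) + ?g (0,-1)) / 4" .
  hence "ennreal (measure SRW X) = ennreal ((measure SRW {\<omega>. (1,0) ## \<omega> \<in> X} + measure SRW {\<omega>. (-1,0) ## \<omega> \<in> X}
     + measure SRW {\<omega>. (0,1) ## \<omega> \<in> X} + measure SRW {\<omega>. (0,-1) ## \<omega> \<in> X}) / 4)"
    using Cons_meas[OF X]
    by (simp add: S.emeasure_eq_measure divide_ennreal[symmetric] ennreal_plus[symmetric] del: ennreal_plus)
  thus ?thesis by (subst (asm) ennreal_inj) auto
qed

definition nbsum :: "(pt \<Rightarrow> real) \<Rightarrow> pt \<Rightarrow> real" where
  "nbsum f y = f (fst y + 1, snd y) + f (fst y - 1, snd y) + f (fst y, snd y + 1) + f (fst y, snd y - 1)"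

definition E1 :: "pt set \<Rightarrow> pt set \<Rightarrow> pt \<Rightarrow> nat \<Rightarrow> pt stream set" where
  "E1 A B z T = {\<omega>. \<exists>n. 1 \<le> n \<and> n \<le> T \<and> walk z \<omega> n \<in> B \<and> (\<forall>m. 1 \<le> m \<and> m \<le> n \<longrightarrow> walk z \<omega> m \<notin> A)}"

definition F1 :: "pt set \<Rightarrow> pt \<Rightarrow> pt \<Rightarrow> nat \<Rightarrow> pt stream set" where
  "F1 A x z T = {\<omega>. \<exists>n\<le>T. walk z \<omega> n = x \<and> (\<forall>m<n. walk z \<omega> m \<notin> A)}"

lemma E1_meas[measurable]: "E1 A B z T \<in> sets SRW"
proof -
  have "{\<omega> \<in> space SRW. \<exists>n. 1 \<le> n \<and> n \<le> T \<and> walk z \<omega> n \<in> B \<and> (\<forall>m. 1 \<le> m \<and> m \<le> n \<longrightarrow> walk z \<omega> m \<notin> A)} \<in> sets SRW"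
    by measurable
  thus ?thesis by (simp add: E1_def)
qed

lemma F1_meas[measurable]: "F1 A x z T \<in> sets SRW"
proof -
  have "{\<omega> \<in> space SRW. \<exists>n\<le>T. walk z \<omega> n = x \<and> (\<forall>m<n. walk z \<omega> m \<notin> A)} \<in> sets SRW"
    by measurable
  thus ?thesis by (simp add: F1_def)
qed

lemma E1_Cons: "(t ## \<omega> \<in> E1 A B z (Suc T)) \<longleftrightarrow>
   ((fst z + fst t, snd z + snd t) \<notin> A \<and> ((fst z + fst t, snd z + snd t) \<in> B \<or> \<omega> \<in> E1 A B (fst z + fst t, snd z + snd t) T))"
  (is "?L \<longleftrightarrow> ?y \<notin> A \<and> (?y \<in> B \<or> _)")
proof
  assume ?L
  then obtain n where n: "1 \<le> n" "n \<le> Suc T" "walk z (t ## \<omega>) n \<in> B"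
     and m: "\<And>m. 1 \<le> m \<Longrightarrow> m \<le> n \<Longrightarrow> walk z (t ## \<omega>) m \<notin> A"
    unfolding E1_def by blast
  obtain n' where n': "n = Suc n'" using n(1) by (cases n) auto
  have "walk z (t ## \<omega>) 1 \<notin> A" using m[of 1] n by auto
  hence yA: "?y \<notin> A" using walk_Cons[of z t \<omega> 0] by simp
  show "?y \<notin> A \<and> (?y \<in> B \<or> \<omega> \<in> E1 A B ?y T)"
  proof (cases "n' = 0")
    case True
    with n n' walk_Cons[of z t \<omega> 0] yA show ?thesis by simp
  next
    case False
    have "\<omega> \<in> E1 A B ?y T"
      unfolding E1_def
    proof (intro CollectI exI[of _ n'] conjI allI impI)
      show "1 \<le> n'" using False by simp
      show "n' \<le> T" using n n' by simp
      show "walk ?y \<omega> n' \<in> B" using n(3) n' walk_Cons[of z t \<omega> n'] by simp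
      fix m assume "1 \<le> m \<and> m \<le> n'"
      thus "walk ?y \<omega> m \<notin> A" using m[of "Suc m"] n' walk_Cons[of z t \<omega> m] by simp
    qed
    with yA show ?thesis by simp
  qed
next
  assume R: "?y \<notin> A \<and> (?y \<in> B \<or> \<omega> \<in> E1 A B ?y T)"
  show ?L
  proof (cases "?y \<in> B")
    case True
    show ?thesis unfolding E1_def
      apply (intro CollectI exI[of _ 1])
      using True R walk_Cons[of z t \<omega> 0] by (auto simp: le_Suc_eq)
  next
    case False
    with R obtain n where n: "1 \<le> n" "n \<le> T" "walk ?y \<omega> n \<in> B"
      and m: "\<And>m. 1 \<le> m \<Longrightarrow> m \<le> n \<Longrightarrow> walk ?y \<omega> m \<notin> A"
      unfolding E1_def by blast
    show ?thesis unfolding E1_def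
    proof (intro CollectI exI[of _ "Suc n"] conjI allI impI)
      show "1 \<le> Suc n" "Suc n \<le> Suc T" using n by auto
      show "walk z (t ## \<omega>) (Suc n) \<in> B" using n(3) walk_Cons[of z t \<omega> n] by simp
      fix k assume k: "1 \<le> k \<and> k \<le> Suc n"
      then obtain k' where k': "k = Suc k'" by (cases k) auto
      show "walk z (t ## \<omega>) k \<notin> A"
      proof (cases "k' = 0")
        case True thus ?thesis using k' R walk_Cons[of z t \<omega> 0] by simp
      next
        case False thus ?thesis using k k' m[of k'] walk_Cons[of z t \<omega> k'] by simp
      qed
    qed
  qed
qed

lemma F1_Cons: "(t ## \<omega> \<in> F1 A x z (Suc T)) \<longleftrightarrow>
   (z = x \<or> (z \<notin> A \<and> \<omega> \<in> F1 A x (fst z + fst t, snd z + snd t) T))"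
  (is "?L \<longleftrightarrow> _ \<or> (_ \<and> \<omega> \<in> F1 A x ?y T)")
proof
  assume ?L
  then obtain n where n: "n \<le> Suc T" "walk z (t ## \<omega>) n = x"
     and m: "\<And>m. m < n \<Longrightarrow> walk z (t ## \<omega>) m \<notin> A"
    unfolding F1_def by blast
  show "z = x \<or> (z \<notin> A \<and> \<omega> \<in> F1 A x ?y T)"
  proof (cases n)
    case 0 thus ?thesis using n by simp
  next
    case (Suc n')
    have "z \<notin> A" using m[of 0] Suc by simp
    moreover have "\<omega> \<in> F1 A x ?y T"
      unfolding F1_def
    proof (intro CollectI exI[of _ n'] conjI allI impI)
      show "n' \<le> T" using n Suc by simp
      show "walk ?y \<omega> n' = x" using n(2) Suc walk_Cons[of z t \<omega> n'] by simp
      fix m assume "m < n'"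
      thus "walk ?y \<omega> m \<notin> A" using m[of "Suc m"] Suc walk_Cons[of z t \<omega> m] by simp
    qed
    ultimately show ?thesis by simp
  qed
next
  assume R: "z = x \<or> (z \<notin> A \<and> \<omega> \<in> F1 A x ?y T)"
  show ?L
  proof (cases "z = x")
    case True
    show ?thesis unfolding F1_def using True by (intro CollectI exI[of _ 0]) auto
  next
    case False
    with R have zA: "z \<notin> A" and "\<omega> \<in> F1 A x ?y T" by auto
    then obtain n where n: "n \<le> T" "walk ?y \<omega> n = x"
      and m: "\<And>m. m < n \<Longrightarrow> walk ?y \<omega> m \<notin> A"
      unfolding F1_def by blast
    show ?thesis unfolding F1_def
    proof (intro CollectI exI[of _ "Suc n"] conjI allI impI)
      show "Suc n \<le> Suc T" using n by auto
      show "walk z (t ## \<omega>) (Suc n) = x" using n(2) walk_Cons[of z t \<omega> n] by simp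
      fix k assume k: "k < Suc n"
      show "walk z (t ## \<omega>) k \<notin> A"
      proof (cases k)
        case 0 thus ?thesis using zA by simp
      next
        case (Suc k') thus ?thesis using k m[of k'] walk_Cons[of z t \<omega> k'] by simp
      qed
    qed
  qed
qed

definition u1 :: "pt set \<Rightarrow> pt set \<Rightarrow> nat \<Rightarrow> pt \<Rightarrow> real" where
  "u1 A B T z = measure SRW (E1 A B z T)"

definition a1 :: "pt set \<Rightarrow> pt \<Rightarrow> nat \<Rightarrow> pt \<Rightarrow> real" where
  "a1 A x T z = measure SRW (F1 A x z T)"

lemma prob_UNIV: "measure SRW UNIV = 1"
  using S.prob_space by simp

lemma u1_Suc: "u1 A B (Suc T) z = nbsum (\<lambda>y. if y \<in> A then 0 else if y \<in> B then 1 else u1 A B T y) z / 4"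
proof -
  have eq: "{\<omega>. t ## \<omega> \<in> E1 A B z (Suc T)} = (let y = (fst z + fst t, snd z + snd t) in
      if y \<in> A then {} else if y \<in> B then UNIV else E1 A B y T)" for t
    by (auto simp: E1_Cons Let_def)
  have m: "measure SRW {\<omega>. t ## \<omega> \<in> E1 A B z (Suc T)} = (let y = (fst z + fst t, snd z + snd t) in
      if y \<in> A then 0 else if y \<in> B then 1 else u1 A B T y)" for t
    unfolding eq by (simp add: Let_def prob_UNIV u1_def)
  show ?thesis
    unfolding u1_def[of A B "Suc T"] SRW_step[OF E1_meas] m
    by (simp add: nbsum_def u1_def Let_def)
qed

lemma a1_0: "a1 A x 0 z = (if z = x then 1 else 0)"
proof -
  have "F1 A x z 0 = (if z = x then UNIV else {})" by (auto simp: F1_def)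
  thus ?thesis by (simp add: a1_def prob_UNIV)
qed

lemma a1_Suc: "a1 A x (Suc T) z = (if z = x then 1 else if z \<in> A then 0 else nbsum (a1 A x T) z / 4)"
proof -
  have eq: "{\<omega>. t ## \<omega> \<in> F1 A x z (Suc T)} = 
      (if z = x then UNIV else if z \<in> A then {} else F1 A x (fst z + fst t, snd z + snd t) T)" for t
    by (auto simp: F1_Cons)
  show ?thesis
    unfolding a1_def[of A x "Suc T"] SRW_step[OF F1_meas] eq
    by (simp add: nbsum_def a1_def prob_UNIV)
qed

definition nb :: "pt \<Rightarrow> pt set" where
  "nb y = {(fst y + 1, snd y), (fst y - 1, snd y), (fst y, snd y + 1), (fst y, snd y - 1)}"

definition sq :: "pt \<Rightarrow> real" where
  "sq y = real_of_int (fst y)^2 + real_of_int (snd y)^2"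

lemma nbsum_mono: "(\<And>y'. y' \<in> nb y \<Longrightarrow> f y' \<le> g y' + E) \<Longrightarrow> nbsum f y \<le> nbsum g y + 4 * E"
  unfolding nbsum_def nb_def by (smt (verit) insertCI)

lemma nbsum_sq: "nbsum sq y = 4 * sq y + 4"
  unfolding nbsum_def sq_def by (simp add: power2_eq_square algebra_simps)

lemma nbsum_add: "nbsum (\<lambda>y. f y + g y) z = nbsum f z + nbsum g z"
  unfolding nbsum_def by simp

lemma nbsum_cmult: "nbsum (\<lambda>y. c * f y) z = c * nbsum f z"
  unfolding nbsum_def by (simp add: algebra_simps)

lemma test_fn:
  fixes V :: "nat \<Rightarrow> pt \<Rightarrow> real" and f :: "pt \<Rightarrow> real" and c :: "pt \<Rightarrow> real" and Stop D :: "pt set"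
  defines "st \<equiv> \<lambda>y v. if y \<in> Stop then c y else c y + v"
  assumes Vrec: "\<And>T y. V (Suc T) y = nbsum (\<lambda>y'. st y' (V T y')) y / 4"
    and V0: "\<And>y. y \<in> D \<Longrightarrow> 0 \<le> V 0 y"
    and closed: "\<And>y y'. y \<in> D \<Longrightarrow> y' \<in> nb y \<Longrightarrow> y' \<notin> Stop \<Longrightarrow> y' \<in> D"
    and fM: "\<And>y. y \<in> D \<Longrightarrow> f y \<le> M"
    and strict: "\<And>y. y \<in> D \<Longrightarrow> f y + \<delta> \<le> nbsum (\<lambda>y'. st y' (f y')) y / 4"
    and dpos: "0 \<le> \<delta>"
  shows "y \<in> D \<Longrightarrow> f y \<le> V T y + max 0 (M - \<delta> * T)"
proof (induction T arbitrary: y)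
  case 0 thus ?case using V0[of y] fM[of y] by simp
next
  case (Suc T)
  let ?E = "max 0 (M - \<delta> * T)"
  have "nbsum (\<lambda>y'. st y' (f y')) y \<le> nbsum (\<lambda>y'. st y' (V T y')) y + 4 * ?E"
  proof (rule nbsum_mono)
    fix y' assume y': "y' \<in> nb y"
    show "st y' (f y') \<le> st y' (V T y') + ?E"
    proof (cases "y' \<in> Stop")
      case True thus ?thesis by (simp add: st_def)
    next
      case False
      hence "y' \<in> D" using closed[OF Suc.prems y'] by simp
      from Suc.IH[OF this] False show ?thesis by (simp add: st_def)
    qed
  qed
  hence "f y \<le> V (Suc T) y + ?E - \<delta>"
    using strict[OF Suc.prems] Vrec[of T y] by simp
  also have "\<dots> \<le> V (Suc T) y + max 0 (M - \<delta> * real (Suc T))"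
    using dpos by (simp add: algebra_simps)
  finally show ?case .
qed

lemma test_fn2:
  fixes V :: "nat \<Rightarrow> pt \<Rightarrow> real" and f0 :: "pt \<Rightarrow> real" and c :: "pt \<Rightarrow> real" and Stop D :: "pt set"
  defines "st \<equiv> \<lambda>y v. if y \<in> Stop then c y else c y + v"
  assumes Vrec: "\<And>T y. V (Suc T) y = nbsum (\<lambda>y'. st y' (V T y')) y / 4"
    and V0: "\<And>y. y \<in> D \<Longrightarrow> 0 \<le> V 0 y"
    and closed: "\<And>y y'. y \<in> D \<Longrightarrow> y' \<in> nb y \<Longrightarrow> y' \<notin> Stop \<Longrightarrow> y' \<in> D"
    and bd1: "\<And>y. y \<in> D \<Longrightarrow> sq y \<le> Bd"
    and bd2: "\<And>y y'. y \<in> D \<Longrightarrow> y' \<in> nb y \<Longrightarrow> sq y' \<le> Bd"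
    and fM: "\<And>y. y \<in> D \<Longrightarrow> f0 y \<le> M"
    and sub: "\<And>y. y \<in> D \<Longrightarrow> f0 y \<le> nbsum (\<lambda>y'. st y' (f0 y')) y / 4"
    and y0: "y0 \<in> D" and eta: "\<eta> > 0"
  shows "\<exists>T. f0 y0 - \<eta> * Bd \<le> V T y0"
proof -
  define f where "f y = f0 y + \<eta> * (sq y - Bd)" for y
  have fM': "f y \<le> M" if "y \<in> D" for y
  proof -
    have "\<eta> * (sq y - Bd) \<le> 0" using bd1[OF that] eta by (simp add: mult_le_0_iff)
    thus ?thesis using fM[OF that] by (simp add: f_def)
  qed
  have strict: "f y + \<eta> \<le> nbsum (\<lambda>y'. st y' (f y')) y / 4" if y: "y \<in> D" for y
  proof -
    have "nbsum (\<lambda>y'. st y' (f0 y') + \<eta> * (sq y' - Bd)) y \<le> nbsum (\<lambda>y'. st y' (f y')) y + 4 * 0"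
    proof (rule nbsum_mono)
      fix y' assume y': "y' \<in> nb y"
      have "\<eta> * (sq y' - Bd) \<le> 0" using bd2[OF y y'] eta by (simp add: mult_le_0_iff)
      thus "st y' (f0 y') + \<eta> * (sq y' - Bd) \<le> st y' (f y') + 0"
        by (cases "y' \<in> Stop") (auto simp: st_def f_def)
    qed
    moreover have "nbsum (\<lambda>y'. st y' (f0 y') + \<eta> * (sq y' - Bd)) y
       = nbsum (\<lambda>y'. st y' (f0 y')) y + \<eta> * (4 * sq y + 4 - 4 * Bd)"
      unfolding nbsum_add nbsum_cmult using nbsum_sq[of y]
      by (simp add: nbsum_def algebra_simps)
    ultimately show ?thesis using sub[OF y] by (simp add: f_def algebra_simps)
  qed
  define T where "T = nat \<lceil>M / \<eta>\<rceil>"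
  have "M - \<eta> * real T \<le> 0"
  proof -
    have "M / \<eta> \<le> real T" unfolding T_def by linarith
    thus ?thesis using eta by (simp add: field_simps)
  qed
  moreover have "f y0 \<le> V T y0 + max 0 (M - \<eta> * T)"
  proof -
    have Vrec': "\<And>T y. V (Suc T) y = nbsum (\<lambda>y'. if y' \<in> Stop then c y' else c y' + V T y') y / 4"
      using Vrec by (simp add: st_def)
    have strict': "\<And>y. y \<in> D \<Longrightarrow> f y + \<eta> \<le> nbsum (\<lambda>y'. if y' \<in> Stop then c y' else c y' + f y') y / 4"
      using strict by (simp add: st_def)
    show ?thesis by (rule test_fn[OF Vrec' V0 closed fM' strict' less_imp_le[OF eta] y0])
  qed
  ultimately have "f y0 \<le> V T y0" by simp
  moreover have "f0 y0 - \<eta> * Bd \<le> f y0"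
    using eta by (simp add: f_def sq_def algebra_simps)
  ultimately show ?thesis by (intro exI[of _ T]) simp
qed

definition mu :: "nat \<Rightarrow> real" where "mu j = pi / 2^j"
definition lam :: "nat \<Rightarrow> real" where "lam j = arcosh (2 - cos (mu j))"
definition trm :: "real \<Rightarrow> nat \<Rightarrow> pt \<Rightarrow> real" where
  "trm q j x = q^j * (1 - exp (- lam j * real_of_int (snd x)) * cos (mu j * real_of_int (fst x)))"
definition GG :: "real \<Rightarrow> pt \<Rightarrow> real" where
  "GG q x = (\<Sum>j. trm q j x)"

lemma mu_pos: "0 < mu j" by (simp add: mu_def)
lemma mu_le_pi: "mu j \<le> pi"
proof -
  have "(1::real) \<le> 2^j" by simp
  thus ?thesis unfolding mu_def by (simp add: field_simps)
qed

lemma cosh_lam: "cosh (lam j) = 2 - cos (mu j)"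
  unfolding lam_def by (rule cosh_arcosh_real) (use cos_le_one[of "mu j"] in linarith)

lemma lam_nonneg: "0 \<le> lam j"
  unfolding lam_def by (rule arcosh_nonneg_real) (use cos_le_one[of "mu j"] in linarith)

lemma one_minus_cos: "1 - cos (y::real) \<le> y^2 / 2"
proof -
  have "cos y = cos (2 * (y/2))" by simp
  also have "\<dots> = 1 - 2 * sin (y/2) ^ 2" by (rule cos_double_sin)
  finally have "1 - cos y = 2 * sin (y/2)^2" by simp
  moreover have "sin (y/2)^2 \<le> (y/2)^2"
    using abs_sin_x_le_abs_x[of "y/2"] by (metis abs_ge_zero power2_abs power_mono)
  ultimately show ?thesis by (simp add: power_divide)
qed

lemma lam_le: "lam j \<le> 4 * mu j"
proof -
  define d where "d = 1 - cos (mu j)"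
  have d0: "0 \<le> d" "d \<le> 2" using cos_le_one[of "mu j"] cos_ge_minus_one[of "mu j"] by (auto simp: d_def)
  have dmu: "d \<le> (mu j)^2 / 2" unfolding d_def by (rule one_minus_cos)
  have x1: "2 - cos (mu j) = 1 + d" by (simp add: d_def)
  have "d * d \<le> 2 * d" using d0 by (intro mult_right_mono) auto
  hence "(1 + d)^2 - 1 \<le> 4 * d" by (simp add: power2_eq_square algebra_simps)
  also have "\<dots> \<le> 2 * (mu j)^2" using dmu by simp
  finally have "((1 + d)^2 - 1) powr (1/2) \<le> (2 * (mu j)^2) powr (1/2)"
    using d0 by (intro powr_mono2) (auto simp: power2_eq_square algebra_simps)
  also have "\<dots> = sqrt 2 * mu j" using mu_pos[of j]
    by (simp add: powr_half_sqrt real_sqrt_mult)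
  also have "\<dots> \<le> 2 * mu j" using mu_pos[of j] by (intro mult_right_mono) (auto simp: sqrt2_less_2 less_imp_le)
  finally have sq: "((1 + d)^2 - 1) powr (1/2) \<le> 2 * mu j" .
  have pos: "0 < 1 + d + ((1 + d)^2 - 1) powr (1/2)" using d0 by (simp add: add_pos_nonneg)
  have "lam j = ln (1 + d + ((1 + d)^2 - 1) powr (1/2))"
    by (simp add: lam_def arcosh_def x1)
  also have "\<dots> \<le> d + ((1 + d)^2 - 1) powr (1/2)" using ln_le_minus_one[OF pos] by simp
  also have "\<dots> \<le> (mu j)^2 / 2 + 2 * mu j" using dmu sq by simp
  also have "(mu j)^2 / 2 \<le> 2 * mu j"
  proof -
    have "mu j * mu j \<le> 4 * mu j" using mu_le_pi[of j] mu_pos[of j] pi_less_4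
      by (intro mult_right_mono) auto
    thus ?thesis by (simp add: power2_eq_square)
  qed
  finally show ?thesis by simp
qed

lemma trm_harm: "nbsum (trm q j) x = 4 * trm q j x"
proof -
  define a where "a = lam j"
  define b where "b = mu j"
  define s where "s = real_of_int (snd x)"
  define t where "t = real_of_int (fst x)"
  have ch: "cosh a = 2 - cos b" unfolding a_def b_def by (rule cosh_lam)
  have e1: "exp (- a * (s + 1)) = exp (- a * s) * exp (- a)" by (simp add: algebra_simps exp_add[symmetric])
  have e2: "exp (- a * (s - 1)) = exp (- a * s) * exp a" by (simp add: algebra_simps exp_add[symmetric])
  have c1: "cos (b * (t + 1)) = cos (b*t) * cos b - sin (b*t) * sin b" by (simp add: algebra_simps cos_add)
  have c2: "cos (b * (t - 1)) = cos (b*t) * cos b + sin (b*t) * sin b" by (simp add: algebra_simps cos_diff)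
  have ch2: "exp a + exp (- a) = 2 * (2 - cos b)" using ch by (simp add: cosh_field_def)
  have "nbsum (trm q j) x = q^j * ((1 - exp (- a * s) * cos (b * (t + 1))) + (1 - exp (- a * s) * cos (b * (t - 1)))
     + (1 - exp (- a * (s + 1)) * cos (b * t)) + (1 - exp (- a * (s - 1)) * cos (b * t)))"
    unfolding nbsum_def trm_def a_def[symmetric] b_def[symmetric] s_def t_def by (simp add: algebra_simps)
  also have "\<dots> = q^j * (4 - exp (- a * s) * cos (b*t) * (2 * cos b + (exp a + exp (-a))))"
    unfolding e1 e2 c1 c2 by (simp add: algebra_simps)
  also have "\<dots> = 4 * trm q j x"
    unfolding ch2 trm_def a_def[symmetric] b_def[symmetric] s_def[symmetric] t_def[symmetric] by (simp add: algebra_simps)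
  finally show ?thesis .
qed

lemma trm_nonneg: "0 \<le> snd x \<Longrightarrow> 0 < q \<Longrightarrow> 0 \<le> trm q j x"
proof -
  assume h: "0 \<le> snd x" "0 < q"
  define e where "e = exp (- lam j * real_of_int (snd x))"
  define c where "c = cos (mu j * real_of_int (fst x))"
  have e: "e \<le> 1" "0 \<le> e" using h lam_nonneg[of j] by (auto simp: e_def mult_nonneg_nonneg)
  have "e * c \<le> e" using e(2) cos_le_one unfolding c_def by (rule mult_left_le[rotated])
  hence "0 \<le> 1 - e * c" using e by linarith
  thus ?thesis using h unfolding trm_def e_def[symmetric] c_def[symmetric] by simp
qed

lemma trm_upper: "0 \<le> snd x \<Longrightarrow> 0 < q \<Longrightarrow>
   trm q j x \<le> q^j * (4 * mu j * real_of_int (snd x) + (mu j * real_of_int (fst x))^2 / 2)"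
proof -
  assume h: "0 \<le> snd x" "0 < q"
  define e where "e = exp (- lam j * real_of_int (snd x))"
  define c where "c = cos (mu j * real_of_int (fst x))"
  have e1: "e \<le> 1" "0 \<le> e" using h lam_nonneg[of j] by (auto simp: e_def mult_nonneg_nonneg)
  have "1 - e \<le> lam j * real_of_int (snd x)" using exp_ge_add_one_self[of "- lam j * real_of_int (snd x)"]
    by (simp add: e_def)
  also have "\<dots> \<le> 4 * mu j * real_of_int (snd x)" using lam_le[of j] h by (intro mult_right_mono) auto
  finally have a: "1 - e \<le> 4 * mu j * real_of_int (snd x)" .
  have "e * (1 - c) \<le> 1 - c" using e1 cos_le_one[of "mu j * real_of_int (fst x)"] by (simp add: c_def mult_left_le_one_le)
  also have "\<dots> \<le> (mu j * real_of_int (fst x))^2 / 2" unfolding c_def by (rule one_minus_cos)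
  finally have b: "e * (1 - c) \<le> (mu j * real_of_int (fst x))^2 / 2" .
  have "1 - e * c = (1 - e) + e * (1 - c)" by (simp add: algebra_simps)
  hence "1 - e * c \<le> 4 * mu j * real_of_int (snd x) + (mu j * real_of_int (fst x))^2 / 2" using a b by linarith
  thus ?thesis unfolding trm_def e_def[symmetric] c_def[symmetric] using h by (intro mult_left_mono) auto
qed

lemma trm_upper2: assumes "0 \<le> snd x" "0 < q"
  shows "trm q j x \<le> (q/2)^j * (4 * pi * real_of_int (snd x) + pi^2 * (real_of_int (fst x))^2)"
proof -
  define t where "t = real_of_int (fst x)"
  define s where "s = real_of_int (snd x)"
  have s0: "0 \<le> s" using assms by (simp add: s_def)
  have p: "(1::real) \<le> 2^j" by simp
  have "(mu j * t)^2 / 2 = (pi^2 * t^2 / 2^j) * (1 / (2 * 2^j))"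
    by (simp add: mu_def power_mult_distrib power_divide power2_eq_square mult_ac)
  also have "\<dots> \<le> (pi^2 * t^2 / 2^j) * 1"
    using p by (intro mult_left_mono) (auto simp: order_trans[OF p])
  finally have a: "(mu j * t)^2 / 2 \<le> pi^2 * t^2 / 2^j" by simp
  have b: "4 * mu j * s = 4 * pi * s / 2^j" by (simp add: mu_def)
  have "trm q j x \<le> q^j * (4 * mu j * s + (mu j * t)^2 / 2)"
    unfolding s_def t_def by (rule trm_upper[OF assms])
  also have "\<dots> \<le> q^j * ((4 * pi * s + pi^2 * t^2) / 2^j)"
    using a b assms(2) by (intro mult_left_mono) (auto simp: add_divide_distrib)
  also have "\<dots> = (q/2)^j * (4 * pi * s + pi^2 * t^2)"
    by (simp add: power_divide)
  finally show ?thesis by (simp add: s_def t_def)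
qed

lemma trm_summable: assumes "0 \<le> snd x" "0 < q" "q < 2" shows "summable (\<lambda>j. trm q j x)"
proof (rule summable_comparison_test)
  show "summable (\<lambda>j. (q/2)^j * (4 * pi * real_of_int (snd x) + pi^2 * (real_of_int (fst x))^2))"
    using assms by (intro summable_mult2 summable_geometric) auto
  show "\<exists>N. \<forall>n\<ge>N. norm (trm q n x) \<le> (q/2)^n * (4 * pi * real_of_int (snd x) + pi^2 * (real_of_int (fst x))^2)"
    using trm_upper2[OF assms(1,2)] trm_nonneg[OF assms(1,2)] by auto
qed

lemma GG_nonneg: assumes "0 \<le> snd x" "0 < q" "q < 2" shows "0 \<le> GG q x"
  unfolding GG_def using trm_summable[OF assms] trm_nonneg[OF assms(1,2)] by (intro suminf_nonneg) auto

lemma GG_harm: assumes "1 \<le> snd x" "0 < q" "q < 2" shows "nbsum (GG q) x = 4 * GG q x"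
proof -
  let ?x1 = "(fst x + 1, snd x)" and ?x2 = "(fst x - 1, snd x)" and ?x3 = "(fst x, snd x + 1)" and ?x4 = "(fst x, snd x - 1)"
  have s: "summable (\<lambda>j. trm q j y)" if "y \<in> {?x1, ?x2, ?x3, ?x4}" for y
    using that assms by (intro trm_summable) auto
  have "nbsum (GG q) x = (\<Sum>j. trm q j ?x1) + (\<Sum>j. trm q j ?x2) + (\<Sum>j. trm q j ?x3) + (\<Sum>j. trm q j ?x4)"
    by (simp add: nbsum_def GG_def)
  also have "\<dots> = (\<Sum>j. trm q j ?x1 + trm q j ?x2 + trm q j ?x3 + trm q j ?x4)"
    using s by (subst suminf_add, auto intro!: summable_add)+
  also have "\<dots> = (\<Sum>j. 4 * trm q j x)"
    using trm_harm[of q _ x] by (simp add: nbsum_def)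
  also have "\<dots> = 4 * GG q x" unfolding GG_def
    using assms by (intro suminf_mult trm_summable) auto
  finally show ?thesis .
qed

lemma GG_ge_trm: assumes "0 \<le> snd x" "0 < q" "q < 2" shows "trm q j x \<le> GG q x"
proof -
  have "sum (\<lambda>j. trm q j x) {j} \<le> GG q x"
    unfolding GG_def using trm_summable[OF assms] trm_nonneg[OF assms(1,2)]
    by (intro sum_le_suminf) auto
  thus ?thesis by simp
qed

lemma GG_lower:
  assumes x2: "0 \<le> snd x" and x1: "1 \<le> \<bar>fst x\<bar>" and g: "0 < \<gamma>" and q: "q = 2 powr \<gamma>" "q < 2"
  shows "real_of_int \<bar>fst x\<bar> powr \<gamma> \<le> GG q x"
proof -
  define X where "X = real_of_int \<bar>fst x\<bar>"
  have X1: "1 \<le> X" using x1 by (simp add: X_def)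
  have ex: "\<exists>j. X \<le> 2^j"
  proof -
    obtain n where "X < 2^n" using real_arch_pow[of 2 X] by auto
    thus ?thesis by (auto intro: less_imp_le)
  qed
  define j where "j = (LEAST j. X \<le> 2^j)"
  have j1: "X \<le> 2^j" unfolding j_def by (rule LeastI_ex[OF ex])
  have j2: "2 * X > 2^j"
  proof (cases j)
    case 0 thus ?thesis using X1 by simp
  next
    case (Suc i)
    have "\<not> X \<le> 2^i" using not_less_Least[of i "\<lambda>j. X \<le> 2^j"] Suc unfolding j_def by auto
    thus ?thesis using Suc by simp
  qed
  define \<theta> where "\<theta> = mu j * X"
  have th1: "\<theta> \<le> pi" using j1 by (simp add: \<theta>_def mu_def field_simps)
  have th2: "pi / 2 \<le> \<theta>" using j2 by (simp add: \<theta>_def mu_def field_simps)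
  have "0 \<le> cos (pi - \<theta>)" using th1 th2 by (intro cos_ge_zero) auto
  hence cth: "cos \<theta> \<le> 0" by simp
  have "cos (mu j * real_of_int (fst x)) = cos \<theta>"
  proof -
    have "mu j * real_of_int (fst x) = \<theta> \<or> mu j * real_of_int (fst x) = - \<theta>"
      unfolding \<theta>_def X_def by (auto simp: abs_if)
    thus ?thesis by auto
  qed
  hence c0: "cos (mu j * real_of_int (fst x)) \<le> 0" using cth by simp
  have q0: "0 < q" using q by simp
  have "1 \<le> 1 - exp (- lam j * real_of_int (snd x)) * cos (mu j * real_of_int (fst x))"
    using c0 by (simp add: mult_nonneg_nonpos)
  hence "q^j \<le> trm q j x" unfolding trm_def using q0 by simp
  also have "\<dots> \<le> GG q x" using GG_ge_trm[OF x2 q0 q(2)] .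
  finally have a: "q^j \<le> GG q x" .
  have "q^j = (2^j) powr \<gamma>"
    unfolding q by (simp add: powr_realpow[symmetric] powr_powr mult.commute)
  moreover have "X powr \<gamma> \<le> (2^j) powr \<gamma>" using j1 X1 g by (intro powr_mono2) auto
  ultimately show ?thesis using a by (simp add: X_def)
qed

lemma GG_axis:
  assumes q: "1 < q" "q < 2"
  shows "GG q (0, 2^J) \<le> q^J * (1 / (q - 1) + 4 * pi / (1 - q / 2))"
proof -
  let ?x = "(0::int, 2^J::int)"
  let ?t = "\<lambda>j. trm q j ?x"
  have x0: "0 \<le> snd ?x" by simp
  have q0: "0 < q" using q by simp
  have s: "summable ?t" by (rule trm_summable[OF x0 q0 q(2)])
  have t1: "?t j \<le> q^j" for j
  proof -
    have "0 \<le> exp (- lam j * real_of_int (snd ?x))" by simp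
    thus ?thesis unfolding trm_def using q0 by (simp add: mult_left_le)
  qed
  have t2: "?t (i + J) \<le> 4 * pi * q^J * (q/2)^i" for i
  proof -
    have "?t (i + J) \<le> q^(i+J) * (4 * mu (i+J) * real_of_int (snd ?x) + (mu (i+J) * real_of_int (fst ?x))^2 / 2)"
      by (rule trm_upper[OF x0 q0])
    also have "\<dots> = 4 * pi * q^J * (q/2)^i"
      by (simp add: mu_def power_add power_divide field_simps)
    finally show ?thesis .
  qed
  have "GG q ?x = (\<Sum>i. ?t (i + J)) + (\<Sum>i<J. ?t i)"
    unfolding GG_def by (rule suminf_split_initial_segment[OF s])
  also have "(\<Sum>i. ?t (i + J)) \<le> (\<Sum>i. 4 * pi * q^J * (q/2)^i)"
    using t2 summable_ignore_initial_segment[OF s, of J] q by (intro suminf_le summable_mult summable_geometric) auto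
  also have "\<dots> = 4 * pi * q^J / (1 - q/2)"
    using q by (subst suminf_mult) (auto simp: suminf_geometric)
  also have "(\<Sum>i<J. ?t i) \<le> (\<Sum>i<J. q^i)" using t1 by (intro sum_mono) auto
  also have "\<dots> = (q^J - 1) / (q - 1)" using q by (simp add: geometric_sum)
  also have "\<dots> \<le> q^J / (q - 1)" using q by (simp add: divide_right_mono)
  finally show ?thesis by (simp add: algebra_simps)
qed

lemma exists_J:
  fixes q K C :: real
  assumes q: "1 < q" "q < 2"
  shows "\<exists>J. q^J * K + C \<le> 2^J"
proof -
  have "(\<lambda>J. K * (q/2)^J + C * (1/2)^J) \<longlonglongrightarrow> K * 0 + C * 0"
    using q by (intro tendsto_intros LIMSEQ_power_zero) auto
  hence "eventually (\<lambda>J. K * (q/2)^J + C * (1/2)^J < 1) sequentially"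
    by (intro order_tendstoD(2)) auto
  then obtain J where J: "K * (q/2)^J + C * (1/2)^J < 1"
    by (auto simp: eventually_sequentially)
  have "(K * (q/2)^J + C * (1/2)^J) * 2^J = q^J * K + C"
    by (simp add: power_divide field_simps)
  moreover have "(K * (q/2)^J + C * (1/2)^J) * 2^J \<le> 1 * 2^J"
    using J by (intro mult_right_mono) auto
  ultimately show ?thesis by auto
qed

definition qq :: "real \<Rightarrow> real" where "qq \<alpha> = 2 powr (1/\<alpha>)"
definition QQ :: "real \<Rightarrow> nat \<Rightarrow> pt \<Rightarrow> real" where "QQ \<alpha> h0 x = GG (qq \<alpha>) x + real h0 + 1"
definition Bx :: "real \<Rightarrow> nat \<Rightarrow> real \<Rightarrow> real" where
  "Bx \<alpha> h0 R = real_of_int \<lceil>real h0 powr \<alpha>\<rceil> + R powr \<alpha>"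

lemma qq_bounds: "\<alpha> > 1 \<Longrightarrow> 1 < qq \<alpha> \<and> qq \<alpha> < 2"
proof -
  assume a: "\<alpha> > 1"
  have "0 < 1/\<alpha>" "1/\<alpha> < 1" using a by auto
  thus ?thesis unfolding qq_def
    using powr_less_mono[of 0 "1/\<alpha>" 2] powr_less_mono[of "1/\<alpha>" 1 2] by auto
qed

lemma QQ_harm: "\<alpha> > 1 \<Longrightarrow> 1 \<le> snd x \<Longrightarrow> nbsum (QQ \<alpha> h0) x = 4 * QQ \<alpha> h0 x"
  using GG_harm[of x "qq \<alpha>"] qq_bounds[of \<alpha>] by (simp add: QQ_def nbsum_def algebra_simps)

lemma QQ_nonneg: "\<alpha> > 1 \<Longrightarrow> 0 \<le> snd x \<Longrightarrow> 0 \<le> QQ \<alpha> h0 x"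
  using GG_nonneg[of x "qq \<alpha>"] qq_bounds[of \<alpha>] by (simp add: QQ_def)

lemma line0_What: "snd x = 0 \<Longrightarrow> x \<in> What \<alpha> h0"
  by (cases "\<bar>fst x\<bar> \<le> \<lceil>real h0 powr \<alpha>\<rceil>") (auto simp: What_def D0_def U_def Hplane_def)

lemma What_QQ:
  assumes a: "\<alpha> > 1" and x: "x \<in> What \<alpha> h0" "0 \<le> snd x"
  shows "real_of_int (snd x) + 1 \<le> QQ \<alpha> h0 x"
proof -
  have G0: "0 \<le> GG (qq \<alpha>) x" using GG_nonneg[of x "qq \<alpha>"] qq_bounds[OF a] x by simp
  show ?thesis
  proof (cases "x \<in> D0 \<alpha> h0")
    case True thus ?thesis using G0 by (simp add: QQ_def D0_def)
  next
    case False
    hence U: "real_of_int (snd x) \<le> real_of_int \<bar>fst x\<bar> powr (1 / \<alpha>)"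
      using x by (auto simp: What_def U_def)
    show ?thesis
    proof (cases "fst x = 0")
      case True thus ?thesis using U G0 by (simp add: QQ_def)
    next
      case False
      hence "1 \<le> \<bar>fst x\<bar>" by simp
      hence "real_of_int \<bar>fst x\<bar> powr (1 / \<alpha>) \<le> GG (qq \<alpha>) x"
        using a qq_bounds[OF a] x by (intro GG_lower) (auto simp: qq_def)
      thus ?thesis using U by (simp add: QQ_def)
    qed
  qed
qed

lemma axis_notWhat: "int h0 < H \<Longrightarrow> (0, H) \<notin> What \<alpha> h0"
  by (auto simp: What_def D0_def U_def)

lemma bound_x1:
  assumes a: "\<alpha> > 1" and x: "x \<notin> What \<alpha> h0" "0 \<le> snd x" "real_of_int (snd x) \<le> R"
  shows "real_of_int \<bar>fst x\<bar> \<le> Bx \<alpha> h0 R"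
proof (cases "\<bar>fst x\<bar> < \<lceil>real h0 powr \<alpha>\<rceil>")
  case True
  hence "real_of_int \<bar>fst x\<bar> \<le> real_of_int \<lceil>real h0 powr \<alpha>\<rceil>" by simp
  thus ?thesis unfolding Bx_def using powr_ge_zero[of R \<alpha>] by linarith
next
  case False
  hence "\<not> real_of_int (snd x) \<le> real_of_int \<bar>fst x\<bar> powr (1 / \<alpha>)"
    using x by (auto simp: What_def U_def Hplane_def)
  hence lt: "real_of_int \<bar>fst x\<bar> powr (1 / \<alpha>) \<le> R" using x by linarith
  have "real_of_int \<bar>fst x\<bar> = (real_of_int \<bar>fst x\<bar> powr (1 / \<alpha>)) powr \<alpha>"
    using a by (simp add: powr_powr)
  also have "\<dots> \<le> R powr \<alpha>" using lt a by (intro powr_mono2) auto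
  moreover have "0 \<le> \<lceil>real h0 powr \<alpha>\<rceil>"
    using powr_ge_zero[of "real h0" \<alpha>] by (subst zero_le_ceiling) linarith
  hence "0 \<le> real_of_int \<lceil>real h0 powr \<alpha>\<rceil>" by simp
  ultimately show ?thesis unfolding Bx_def by linarith
qed

lemma sq_nb_bound:
  assumes a: "\<alpha> > 1" and y: "y \<notin> What \<alpha> h0" "0 \<le> snd y" "real_of_int (snd y) \<le> R"
    and y': "y' \<in> nb y \<or> y' = y" and y'2: "0 \<le> snd y'" "real_of_int (snd y') \<le> R"
  shows "sq y' \<le> (Bx \<alpha> h0 R + 1)^2 + R^2"
proof -
  have b: "real_of_int \<bar>fst y\<bar> \<le> Bx \<alpha> h0 R" by (rule bound_x1[OF a y])
  have "\<bar>fst y'\<bar> \<le> \<bar>fst y\<bar> + 1" using y' by (auto simp: nb_def)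
  hence "real_of_int \<bar>fst y'\<bar> \<le> Bx \<alpha> h0 R + 1" using b by linarith
  hence "(real_of_int \<bar>fst y'\<bar>)^2 \<le> (Bx \<alpha> h0 R + 1)^2" by (intro power_mono) auto
  moreover have "(real_of_int (snd y'))^2 \<le> R^2" using y'2 by (intro power_mono) auto
  ultimately show ?thesis unfolding sq_def by (simp add: power2_abs)
qed

lemma u1_nonneg: "0 \<le> u1 A B T y" by (simp add: u1_def)

lemma u1_0: "u1 A B 0 y = 0"
proof -
  have "E1 A B y 0 = {}" by (auto simp: E1_def)
  thus ?thesis by (simp add: u1_def)
qed

lemma nbsum_ge3: "(\<And>y'. 0 \<le> f y') \<Longrightarrow> f (fst y, snd y + 1) \<le> nbsum f y"
  unfolding nbsum_def by (smt (z3))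

lemma u1_climb:
  "(\<And>i. 1 \<le> i \<Longrightarrow> i \<le> m \<Longrightarrow> (0, s + int i) \<notin> A \<and> (0, s + int i) \<notin> B) \<Longrightarrow>
    (1/4)^m * u1 A B T (0, s + int m) \<le> u1 A B (T + m) (0, s)"
proof (induction m arbitrary: s)
  case 0 thus ?case by simp
next
  case (Suc m)
  have c1: "(0, s + 1) \<notin> A" "(0, s + 1) \<notin> B" using Suc.prems[of 1] by auto
  have IH: "(1/4)^m * u1 A B T (0, (s + 1) + int m) \<le> u1 A B (T + m) (0, s + 1)"
  proof (rule Suc.IH)
    fix i assume "1 \<le> i" "i \<le> m"
    hence "(0, s + int (Suc i)) \<notin> A \<and> (0, s + int (Suc i)) \<notin> B" using Suc.prems[of "Suc i"] by simp
    thus "(0, s + 1 + int i) \<notin> A \<and> (0, s + 1 + int i) \<notin> B" by (simp add: add.assoc)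
  qed
  have "u1 A B (T + Suc m) (0, s) = nbsum (\<lambda>y. if y \<in> A then 0 else if y \<in> B then 1 else u1 A B (T + m) y) (0, s) / 4"
    by (simp add: u1_Suc)
  also have "\<dots> \<ge> u1 A B (T + m) (0, s + 1) / 4"
  proof -
    have "(\<lambda>y. if y \<in> A then 0 else if y \<in> B then 1 else u1 A B (T + m) y) (fst (0::int, s), snd (0::int, s) + 1)
       \<le> nbsum (\<lambda>y. if y \<in> A then 0 else if y \<in> B then 1 else u1 A B (T + m) y) (0, s)"
      by (rule nbsum_ge3) (simp add: u1_nonneg)
    thus ?thesis using c1 by simp
  qed
  finally have "u1 A B (T + m) (0, s + 1) / 4 \<le> u1 A B (T + Suc m) (0, s)" .
  moreover have "(1/4)^(Suc m) * u1 A B T (0, s + int (Suc m)) = ((1/4)^m * u1 A B T (0, (s + 1) + int m)) / 4"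
    by (simp add: algebra_simps)
  ultimately show ?case using IH by simp
qed

lemma hit_before_ge: "u1 A B T z \<le> hit_before z B A"
proof -
  have m: "{\<omega> \<in> space SRW. \<exists>n\<ge>1. walk z \<omega> n \<in> B \<and> (\<forall>m. 1 \<le> m \<and> m \<le> n \<longrightarrow> walk z \<omega> m \<notin> A)} \<in> sets SRW"
    by measurable
  show ?thesis unfolding u1_def hit_before_def
    by (rule S.finite_measure_mono[OF _ m]) (auto simp: E1_def)
qed

lemma claim1:
  assumes a: "\<alpha> > 1" and QH: "QQ \<alpha> h0 (0, H) \<le> real_of_int H - 1" and hH: "int h0 < H"
    and R: "H < R"
  shows "(1/4)^(nat (H - int h0)) / 2 / real_of_int R \<le> hit_before (0, int h0) (line R) (What \<alpha> h0)"
proof -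
  let ?A = "What \<alpha> h0" and ?B = "line R"
  define Stop where "Stop = ?A \<union> ?B"
  define c where "c y = (if y \<in> ?A then 0 else if y \<in> ?B then 1 else (0::real))" for y
  define D where "D = {y. y \<notin> ?A \<and> 0 < snd y \<and> snd y < R}"
  define Bd where "Bd = (Bx \<alpha> h0 (real_of_int R) + 1)^2 + (real_of_int R)^2"
  define f0 where "f0 y = max 0 ((real_of_int (snd y) - QQ \<alpha> h0 y) / real_of_int R)" for y
  define st where "st = (\<lambda>y v. if y \<in> Stop then c y else c y + v)"
  have R0: "0 < R" using hH R by linarith
  have Bd0: "0 < Bd" unfolding Bd_def using R0 by (intro add_nonneg_pos) auto
  define \<eta> where "\<eta> = 1 / (2 * real_of_int R * Bd)"
  have eta: "0 < \<eta>" using R0 Bd0 by (simp add: \<eta>_def)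
  have Vrec: "u1 ?A ?B (Suc T) y = nbsum (\<lambda>y'. st y' (u1 ?A ?B T y')) y / 4" for T y
  proof -
    have "(\<lambda>y'. st y' (u1 ?A ?B T y')) = (\<lambda>y'. if y' \<in> ?A then 0 else if y' \<in> ?B then 1 else u1 ?A ?B T y')"
      by (auto simp: st_def c_def Stop_def)
    thus ?thesis by (simp add: u1_Suc)
  qed
  have closed: "y' \<in> D" if "y \<in> D" "y' \<in> nb y" "y' \<notin> Stop" for y y'
  proof -
    have "snd y' \<noteq> 0" using that(3) line0_What[of y' \<alpha> h0] by (auto simp: Stop_def)
    moreover have "snd y' \<noteq> R" using that(3) by (auto simp: Stop_def line_def)
    moreover have "snd y - 1 \<le> snd y'" "snd y' \<le> snd y + 1" using that(2) by (auto simp: nb_def)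
    ultimately show ?thesis using that by (auto simp: D_def Stop_def)
  qed
  have bd1: "sq y \<le> Bd" if "y \<in> D" for y
    using that unfolding Bd_def D_def by (intro sq_nb_bound[OF a]) auto
  have bd2: "sq y' \<le> Bd" if "y \<in> D" "y' \<in> nb y" for y y'
  proof -
    have "snd y - 1 \<le> snd y'" "snd y' \<le> snd y + 1" using that(2) by (auto simp: nb_def)
    thus ?thesis using that unfolding Bd_def D_def by (intro sq_nb_bound[OF a, of y]) auto
  qed
  have fM: "f0 y \<le> 1" if "y \<in> D" for y
  proof -
    have "0 \<le> QQ \<alpha> h0 y" using that a by (intro QQ_nonneg) (auto simp: D_def)
    hence "(real_of_int (snd y) - QQ \<alpha> h0 y) / real_of_int R \<le> 1" using that R0 by (auto simp: D_def field_simps)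
    thus ?thesis by (simp add: f0_def)
  qed
  have sub: "f0 y \<le> nbsum (\<lambda>y'. st y' (f0 y')) y / 4" if y: "y \<in> D" for y
  proof -
    let ?g = "\<lambda>y'. (real_of_int (snd y') - QQ \<alpha> h0 y') / real_of_int R"
    have pt: "?g y' \<le> st y' (f0 y') + 0 \<and> 0 \<le> st y' (f0 y') + 0" if y': "y' \<in> nb y" for y'
    proof -
      have s0: "0 \<le> snd y'" using y y' by (auto simp: D_def nb_def)
      have Q0: "0 \<le> QQ \<alpha> h0 y'" by (rule QQ_nonneg[OF a s0])
      show ?thesis
      proof (cases "y' \<in> ?A")
        case True
        have "real_of_int (snd y') + 1 \<le> QQ \<alpha> h0 y'" by (rule What_QQ[OF a True s0])
        hence "?g y' \<le> 0" using R0 by (simp add: divide_nonpos_pos)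
        thus ?thesis using True by (simp add: st_def c_def Stop_def)
      next
        case nA: False
        show ?thesis
        proof (cases "y' \<in> ?B")
          case True
          hence "snd y' = R" by (simp add: line_def)
          hence "?g y' \<le> 1" using Q0 R0 by (simp add: field_simps)
          thus ?thesis using True nA by (simp add: st_def c_def Stop_def)
        next
          case False
          thus ?thesis using nA by (simp add: st_def c_def Stop_def f0_def)
        qed
      qed
    qed
    have A1: "nbsum ?g y \<le> nbsum (\<lambda>y'. st y' (f0 y')) y + 4 * 0"
      using pt by (intro nbsum_mono) auto
    have "nbsum (\<lambda>_. 0) y \<le> nbsum (\<lambda>y'. st y' (f0 y')) y + 4 * 0"
      using pt by (intro nbsum_mono) auto
    hence A2: "0 \<le> nbsum (\<lambda>y'. st y' (f0 y')) y" by (simp add: nbsum_def)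
    have A3: "nbsum ?g y = 4 * ((real_of_int (snd y) - QQ \<alpha> h0 y) / real_of_int R)"
    proof -
      have "nbsum (QQ \<alpha> h0) y = 4 * QQ \<alpha> h0 y" using y a by (intro QQ_harm) (auto simp: D_def)
      moreover have "nbsum ?g y = (nbsum (\<lambda>y'. real_of_int (snd y')) y - nbsum (QQ \<alpha> h0) y) / real_of_int R"
        using R0 by (simp add: nbsum_def field_simps)
      moreover have "nbsum (\<lambda>y'. real_of_int (snd y')) y = 4 * real_of_int (snd y)" by (simp add: nbsum_def)
      ultimately show ?thesis by (simp add: field_simps)
    qed
    have "f0 y = max 0 ((real_of_int (snd y) - QQ \<alpha> h0 y) / real_of_int R)" by (simp add: f0_def)
    thus ?thesis using A1 A2 A3 by linarith
  qed
  let ?y0 = "(0::int, H)"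
  have y0: "?y0 \<in> D" using axis_notWhat[OF hH] hH R by (auto simp: D_def)
  have Vrec': "\<And>T y. u1 ?A ?B (Suc T) y = nbsum (\<lambda>y'. if y' \<in> Stop then c y' else c y' + u1 ?A ?B T y') y / 4"
    using Vrec by (simp add: st_def)
  have sub': "\<And>y. y \<in> D \<Longrightarrow> f0 y \<le> nbsum (\<lambda>y'. if y' \<in> Stop then c y' else c y' + f0 y') y / 4"
    using sub by (simp add: st_def)
  have "\<exists>T. f0 ?y0 - \<eta> * Bd \<le> u1 ?A ?B T ?y0"
    by (rule test_fn2[where V="u1 ?A ?B" and c=c and Stop=Stop and D=D and Bd=Bd and M=1 and \<eta>=\<eta>])
       (fact Vrec' closed bd1 bd2 fM sub' y0 eta | rule u1_nonneg)+
  then obtain T where T: "f0 ?y0 - \<eta> * Bd \<le> u1 ?A ?B T ?y0" by blast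
  have "1 / real_of_int R \<le> f0 ?y0"
    using QH R0 by (simp add: f0_def field_simps)
  moreover have "\<eta> * Bd = 1 / (2 * real_of_int R)" using Bd0 by (simp add: \<eta>_def)
  ultimately have u0: "1 / (2 * real_of_int R) \<le> u1 ?A ?B T ?y0" using T by (simp add: field_simps)
  define m where "m = nat (H - int h0)"
  have Hm: "H = int h0 + int m" using hH by (simp add: m_def)
  have "(1/4)^m * u1 ?A ?B T (0, int h0 + int m) \<le> u1 ?A ?B (T + m) (0, int h0)"
  proof (rule u1_climb)
    fix i assume i: "1 \<le> i" "i \<le> m"
    show "(0, int h0 + int i) \<notin> ?A \<and> (0, int h0 + int i) \<notin> ?B"
      using i axis_notWhat[of h0 "int h0 + int i" \<alpha>] Hm R by (auto simp: line_def)
  qed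
  hence "(1/4)^m * (1 / (2 * real_of_int R)) \<le> u1 ?A ?B (T + m) (0, int h0)"
    using u0 Hm by (smt (verit) mult_left_mono zero_le_power zero_le_divide_1_iff)
  also have "\<dots> \<le> hit_before (0, int h0) ?B ?A" by (rule hit_before_ge)
  finally show ?thesis by (simp add: m_def field_simps)
qed

fun PP :: "pt set \<Rightarrow> nat \<Rightarrow> pt \<Rightarrow> pt \<Rightarrow> real" where
  "PP A 0 y v = (if y = v then 1 else 0)"
| "PP A (Suc n) y v = nbsum (\<lambda>y'. if y' \<in> A then 0 else PP A n y' v) y"

lemma nbsum_nonneg: "(\<And>y'. 0 \<le> f y') \<Longrightarrow> 0 \<le> nbsum f y"
  unfolding nbsum_def by (simp add: add_nonneg_nonneg)

lemma nbsum_le: "(\<And>y'. f y' \<le> g y') \<Longrightarrow> nbsum f y \<le> nbsum g y"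
  unfolding nbsum_def by (simp add: add_mono)

lemma PP_nonneg: "0 \<le> PP A n y v"
  by (induction n arbitrary: y) (auto intro!: nbsum_nonneg)

lemma nbsum_swap: "nbsum (\<lambda>a. nbsum (\<lambda>b. F a b) v) y = nbsum (\<lambda>b. nbsum (\<lambda>a. F a b) y) v"
  by (simp add: nbsum_def algebra_simps)

lemma nbsum_sum: "nbsum (\<lambda>y'. \<Sum>n\<in>S. g n y') y = (\<Sum>n\<in>S. nbsum (g n) y)"
  by (simp add: nbsum_def sum.distrib)

lemma nbsum_div: "nbsum (\<lambda>y'. f y' / c) y = nbsum f y / c"
  by (simp add: nbsum_def add_divide_distrib)

lemma PP_last: "PP A (Suc n) y v = (if v \<in> A then 0 else nbsum (\<lambda>v'. PP A n y v') v)"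
proof (induction n arbitrary: y)
  case 0
  show ?case by (cases y, cases v) (auto simp: nbsum_def)
next
  case (Suc n)
  have "PP A (Suc (Suc n)) y v = nbsum (\<lambda>y'. if y' \<in> A then 0 else PP A (Suc n) y' v) y" by simp
  also have "\<dots> = nbsum (\<lambda>y'. if y' \<in> A then 0 else (if v \<in> A then 0 else nbsum (\<lambda>v'. PP A n y' v') v)) y"
    using Suc.IH by (simp del: PP.simps cong: if_cong)
  also have "\<dots> = (if v \<in> A then 0 else nbsum (\<lambda>y'. nbsum (\<lambda>v'. if y' \<in> A then 0 else PP A n y' v') v) y)"
    by (simp add: nbsum_def)
  also have "\<dots> = (if v \<in> A then 0 else nbsum (\<lambda>v'. PP A (Suc n) y v') v)"
    by (simp add: nbsum_swap[of _ v y])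
  finally show ?case .
qed

lemma PP_mono: "A \<subseteq> A' \<Longrightarrow> PP A' n y v \<le> PP A n y v"
proof (induction n arbitrary: y)
  case 0 thus ?case by simp
next
  case (Suc n)
  show ?case unfolding PP.simps
    by (rule nbsum_le) (use Suc PP_nonneg in auto)
qed

lemma a1_PP: "x \<in> A \<Longrightarrow> a1 A x T z = (\<Sum>n\<le>T. PP A n x z / 4^n)"
proof (induction T arbitrary: z)
  case 0 thus ?case by (auto simp: a1_0)
next
  case (Suc T)
  have sh: "(\<Sum>n\<le>Suc T. PP A n x z / 4^n) = PP A 0 x z + (\<Sum>n\<le>T. PP A (Suc n) x z / 4^(Suc n))"
    by (subst sum.atMost_Suc_shift) simp
  show ?case
  proof (cases "z = x")
    case True
    have "(\<Sum>n\<le>T. PP A (Suc n) x z / 4^(Suc n)) = 0"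
      using Suc.prems True by (intro sum.neutral) (simp add: PP_last del: PP.simps)
    thus ?thesis unfolding sh using True by (simp add: a1_Suc del: PP.simps(2))
  next
    case zx: False
    show ?thesis
    proof (cases "z \<in> A")
      case True
    have "(\<Sum>n\<le>T. PP A (Suc n) x z / 4^(Suc n)) = 0"
      using True by (intro sum.neutral) (simp add: PP_last del: PP.simps)
    thus ?thesis unfolding sh using True zx by (simp add: a1_Suc del: PP.simps(2))
    next
      case False
      have "a1 A x (Suc T) z = nbsum (\<lambda>z'. \<Sum>n\<le>T. PP A n x z' / 4^n) z / 4"
      proof -
        have "a1 A x T = (\<lambda>z'. \<Sum>n\<le>T. PP A n x z' / 4^n)"
          by (rule ext) (rule Suc.IH[OF Suc.prems])
        thus ?thesis using zx False by (simp add: a1_Suc)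
      qed
      also have "\<dots> = (\<Sum>n\<le>T. nbsum (\<lambda>z'. PP A n x z') z / 4^n) / 4"
        by (simp add: nbsum_sum nbsum_div)
      also have "\<dots> = (\<Sum>n\<le>T. PP A (Suc n) x z / 4^(Suc n))"
        using False by (simp add: PP_last sum_divide_distrib mult.commute del: PP.simps)
      finally show ?thesis unfolding sh using zx by (simp del: PP.simps(2))
    qed
  qed
qed

definition WW :: "pt set \<Rightarrow> pt set \<Rightarrow> nat \<Rightarrow> pt \<Rightarrow> real" where
  "WW A Z T y = (\<Sum>n<T. \<Sum>z\<in>Z. PP A (Suc n) y z / 4^(Suc n))"

lemma WW_nonneg: "0 \<le> WW A Z T y"
  unfolding WW_def by (intro sum_nonneg divide_nonneg_pos PP_nonneg) auto

lemma WW_0: "WW A Z 0 y = 0" by (simp add: WW_def)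

lemma if_div: "(if P then 0 else a / c) = (if P then (0::real) else a) / c" by simp

lemma WW_Suc:
  assumes fin: "finite Z"
  shows "WW A Z (Suc T) y = nbsum (\<lambda>y'. if y' \<in> A then 0 else (if y' \<in> Z then 1 else 0) + WW A Z T y') y / 4"
proof -
  have p1: "PP A (Suc 0) y z = nbsum (\<lambda>y'. if y' \<in> A then 0 else (if y' = z then 1 else 0)) y" for z
  proof -
    have "(\<lambda>y'. if y' \<in> A then 0 else PP A 0 y' z) = (\<lambda>y'. if y' \<in> A then 0 else (if y' = z then 1 else 0))"
      by (rule ext) simp
    thus ?thesis by (simp only: PP.simps(2))
  qed
  have g0: "(\<Sum>z\<in>Z. PP A (Suc 0) y z / 4^(Suc 0)) = nbsum (\<lambda>y'. if y' \<in> A then 0 else (if y' \<in> Z then 1 else 0)) y / 4"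
  proof -
    have "(\<Sum>z\<in>Z. PP A (Suc 0) y z / 4^(Suc 0)) = (\<Sum>z\<in>Z. nbsum (\<lambda>y'. if y' \<in> A then 0 else (if y' = z then 1 else 0)) y) / 4"
      by (simp only: p1 sum_divide_distrib power_Suc0_right)
    also have "\<dots> = nbsum (\<lambda>y'. \<Sum>z\<in>Z. if y' \<in> A then 0 else (if y' = z then 1 else 0)) y / 4"
      by (simp only: nbsum_sum)
    also have "(\<lambda>y'. \<Sum>z\<in>Z. if y' \<in> A then 0 else (if y' = z then 1 else (0::real))) = (\<lambda>y'. if y' \<in> A then 0 else (if y' \<in> Z then 1 else 0))"
    proof (rule ext)
      fix y'
      show "(\<Sum>z\<in>Z. if y' \<in> A then 0 else (if y' = z then 1 else (0::real))) = (if y' \<in> A then 0 else (if y' \<in> Z then 1 else 0))"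
        using fin by (cases "y' \<in> A") (simp_all add: sum.delta')
    qed
    finally show ?thesis .
  qed
  have p2: "PP A (Suc (Suc n)) y z / 4^(Suc (Suc n)) = nbsum (\<lambda>y'. if y' \<in> A then 0 else PP A (Suc n) y' z / 4^(Suc n)) y / 4" for n z
  proof -
    have "nbsum (\<lambda>y'. if y' \<in> A then 0 else PP A (Suc n) y' z / 4^(Suc n)) y
        = nbsum (\<lambda>y'. (if y' \<in> A then 0 else PP A (Suc n) y' z) / 4^(Suc n)) y"
      by (simp only: if_div)
    also have "\<dots> = PP A (Suc (Suc n)) y z / 4^(Suc n)"
      by (simp only: nbsum_div PP.simps(2))
    finally show ?thesis by simp
  qed
  have gS: "(\<Sum>n<T. \<Sum>z\<in>Z. PP A (Suc (Suc n)) y z / 4^(Suc (Suc n))) = nbsum (\<lambda>y'. if y' \<in> A then 0 else WW A Z T y') y / 4"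
  proof -
    have "(\<Sum>n<T. \<Sum>z\<in>Z. PP A (Suc (Suc n)) y z / 4^(Suc (Suc n)))
        = (\<Sum>n<T. \<Sum>z\<in>Z. nbsum (\<lambda>y'. if y' \<in> A then 0 else PP A (Suc n) y' z / 4^(Suc n)) y) / 4"
      by (simp only: p2 sum_divide_distrib)
    also have "\<dots> = nbsum (\<lambda>y'. \<Sum>n<T. \<Sum>z\<in>Z. if y' \<in> A then 0 else PP A (Suc n) y' z / 4^(Suc n)) y / 4"
      by (simp only: nbsum_sum)
    also have "(\<lambda>y'. \<Sum>n<T. \<Sum>z\<in>Z. if y' \<in> A then 0 else PP A (Suc n) y' z / 4^(Suc n)) = (\<lambda>y'. if y' \<in> A then 0 else WW A Z T y')"
      by (rule ext) (simp add: WW_def del: PP.simps)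
    finally show ?thesis .
  qed
  have "WW A Z (Suc T) y = (\<Sum>z\<in>Z. PP A (Suc 0) y z / 4^(Suc 0)) + (\<Sum>n<T. \<Sum>z\<in>Z. PP A (Suc (Suc n)) y z / 4^(Suc (Suc n)))"
    unfolding WW_def by (simp only: sum.lessThan_Suc_shift)
  also have "\<dots> = nbsum (\<lambda>y'. if y' \<in> A then 0 else (if y' \<in> Z then 1 else 0)) y / 4 + nbsum (\<lambda>y'. if y' \<in> A then 0 else WW A Z T y') y / 4"
    unfolding g0 gS ..
  also have "\<dots> = (nbsum (\<lambda>y'. (if y' \<in> A then 0 else (if y' \<in> Z then 1 else 0)) + (if y' \<in> A then 0 else WW A Z T y')) y) / 4"
    by (simp only: nbsum_add add_divide_distrib)
  also have "(\<lambda>y'. (if y' \<in> A then 0 else (if y' \<in> Z then 1 else 0)) + (if y' \<in> A then 0 else WW A Z T y'))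
      = (\<lambda>y'. if y' \<in> A then 0 else (if y' \<in> Z then 1 else 0) + WW A Z T y')"
    by (rule ext) simp
  finally show ?thesis .
qed

lemma hit_at_ge: "ennreal (a1 A x T z) \<le> hit_at z A x"
proof -
  have m: "{\<omega> \<in> space SRW. \<exists>n. walk z \<omega> n = x \<and> (\<forall>m<n. walk z \<omega> m \<notin> A)} \<in> sets SRW"
    by measurable
  have "emeasure SRW (F1 A x z T) \<le> hit_at z A x"
    unfolding hit_at_def by (rule emeasure_mono[OF _ m]) (auto simp: F1_def)
  thus ?thesis by (simp add: a1_def S.emeasure_eq_measure)
qed

lemma Hbar_ge:
  assumes x: "x \<in> W \<union> line 0" and sub: "W \<union> line 0 \<subseteq> A'" and Z: "Z \<subseteq> line N - W" "finite Z" "x \<notin> Z"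
  shows "ennreal (WW A' Z T x) \<le> Hbar W N x"
proof -
  let ?A0 = "W \<union> line 0"
  have "WW A' Z T x = (\<Sum>z\<in>Z. \<Sum>n<T. PP A' (Suc n) x z / 4^(Suc n))"
    unfolding WW_def by (rule sum.swap)
  also have "\<dots> = (\<Sum>z\<in>Z. \<Sum>n\<le>T. PP A' n x z / 4^n)"
  proof (rule sum.cong[OF refl])
    fix z assume "z \<in> Z"
    hence "PP A' 0 x z = 0" using Z(3) by auto
    have "(\<Sum>n\<le>T. g n) = g 0 + (\<Sum>n<T. g (Suc n))" for g :: "nat \<Rightarrow> real"
      by (induction T) simp_all
    from this[of "\<lambda>n. PP A' n x z / 4^n"] \<open>PP A' 0 x z = 0\<close>
    show "(\<Sum>n<T. PP A' (Suc n) x z / 4^(Suc n)) = (\<Sum>n\<le>T. PP A' n x z / 4^n)"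
      by (simp del: PP.simps)
  qed
  also have "\<dots> \<le> (\<Sum>z\<in>Z. \<Sum>n\<le>T. PP ?A0 n x z / 4^n)"
    using sub by (intro sum_mono divide_right_mono PP_mono) auto
  also have "\<dots> = (\<Sum>z\<in>Z. a1 ?A0 x T z)"
    using x by (simp add: a1_PP)
  finally have "ennreal (WW A' Z T x) \<le> ennreal (\<Sum>z\<in>Z. a1 ?A0 x T z)" by (rule ennreal_leI)
  also have "\<dots> = (\<Sum>z\<in>Z. ennreal (a1 ?A0 x T z))"
    by (rule sum_ennreal[symmetric]) (simp add: a1_def)
  also have "\<dots> \<le> (\<Sum>z\<in>Z. hit_at z ?A0 x)"
    by (intro sum_mono hit_at_ge)
  also have "\<dots> = (\<Sum>\<^sub>\<infinity>z\<in>Z. hit_at z ?A0 x)"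
    using Z(2) by (rule infsum_finite[symmetric])
  also have "\<dots> \<le> Hbar W N x"
    unfolding Hbar_def
    by (rule infsum_mono_neutral) (use Z in \<open>auto intro: nonneg_summable_on_complete\<close>)
  finally show ?thesis .
qed

lemma V_climb:
  fixes V :: "nat \<Rightarrow> pt \<Rightarrow> real"
  assumes Vrec: "\<And>T y. V (Suc T) y = nbsum (\<lambda>y'. if y' \<in> A then 0 else b y' + V T y') y / 4"
    and b0: "\<And>y. 0 \<le> b y" and V0: "\<And>T y. 0 \<le> V T y"
  shows "(\<And>i. 1 \<le> i \<Longrightarrow> i \<le> m \<Longrightarrow> (0, s + int i) \<notin> A) \<Longrightarrow>
    (1/4)^m * V T (0, s + int m) \<le> V (T + m) (0, s)"
proof (induction m arbitrary: s)
  case 0 thus ?case by simp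
next
  case (Suc m)
  have c1: "(0, s + 1) \<notin> A" using Suc.prems[of 1] by auto
  have IH: "(1/4)^m * V T (0, (s + 1) + int m) \<le> V (T + m) (0, s + 1)"
  proof (rule Suc.IH)
    fix i assume "1 \<le> i" "i \<le> m"
    hence "(0, s + int (Suc i)) \<notin> A" using Suc.prems[of "Suc i"] by simp
    thus "(0, s + 1 + int i) \<notin> A" by (simp add: add.assoc)
  qed
  have "(\<lambda>y. if y \<in> A then 0 else b y + V (T + m) y) (fst (0::int, s), snd (0::int, s) + 1)
       \<le> nbsum (\<lambda>y. if y \<in> A then 0 else b y + V (T + m) y) (0, s)"
    by (rule nbsum_ge3) (simp add: b0 V0 add_nonneg_nonneg)
  hence "b (0, s+1) + V (T + m) (0, s + 1) \<le> 4 * V (T + Suc m) (0, s)"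
    using c1 Vrec[of "T + m" "(0, s)"] by simp
  hence "V (T + m) (0, s + 1) / 4 \<le> V (T + Suc m) (0, s)" using b0[of "(0, s+1)"] by simp
  moreover have "(1/4)^(Suc m) * V T (0, s + int (Suc m)) = ((1/4)^m * V T (0, (s + 1) + int m)) / 4"
    by (simp add: algebra_simps)
  ultimately show ?case using IH by simp
qed

lemma mid_ineq:
  fixes N :: int
  assumes "0 < snd y" "snd y < 2 * N"
  shows "4 * min (real_of_int (snd y)) (real_of_int (2 * N - snd y))
    \<le> nbsum (\<lambda>y'. (if snd y' = N then 1 else 0) + min (real_of_int (snd y')) (real_of_int (2 * N - snd y'))) y"
  using assms unfolding nbsum_def by (cases "snd y < N"; cases "snd y = N") (auto simp: min_def)

lemma maxhelp: "(G::real) \<le> S + 4 * 0 \<Longrightarrow> 0 \<le> S \<Longrightarrow> 4 * t \<le> G \<Longrightarrow> max 0 t \<le> S / 4"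
  by simp

lemma claim2:
  assumes a: "\<alpha> > 1" and QH: "QQ \<alpha> h0 (0, H) \<le> real_of_int H - 1" and hH: "int h0 < H"
    and NH: "H < int N"
  shows "ennreal ((1/4)^(nat (H - int h0)) / 2) \<le> Hbar (What \<alpha> h0) (int N) (0, int h0)"
proof -
  let ?W = "What \<alpha> h0"
  define A' where "A' = ?W \<union> line (2 * int N)"
  define Bz where "Bz = \<lceil>Bx \<alpha> h0 (real_of_int (2 * int N))\<rceil>"
  define Zb where "Zb = {z. snd z = int N \<and> \<bar>fst z\<bar> \<le> Bz \<and> z \<notin> ?W}"
  define c where "c (y::pt) = (if y \<in> A' then 0 else if y \<in> Zb then 1 else (0::real))" for y
  define D where "D = {y. y \<notin> ?W \<and> 0 < snd y \<and> snd y < 2 * int N}"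
  define Bd where "Bd = (Bx \<alpha> h0 (real_of_int (2 * int N)) + 1)^2 + (real_of_int (2 * int N))^2"
  define mf where "mf (y::pt) = min (real_of_int (snd y)) (real_of_int (2 * int N - snd y))" for y
  define f0 where "f0 (y::pt) = max 0 (mf y - QQ \<alpha> h0 y)" for y
  define st where "st = (\<lambda>y v. if y \<in> A' then c y else c y + v)"
  have N0: "0 < int N" using hH NH by linarith
  have Bd0: "0 < Bd" unfolding Bd_def using N0 by (intro add_nonneg_pos) auto
  define \<eta> where "\<eta> = 1 / (2 * Bd)"
  have eta: "0 < \<eta>" using Bd0 by (simp add: \<eta>_def)
  let ?x = "(0::int, int h0)"
  have finZ: "finite Zb"
  proof (rule finite_subset)
    show "Zb \<subseteq> {-Bz..Bz} \<times> {int N}" by (auto simp: Zb_def)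
  qed auto
  have Hb: "ennreal (WW A' Zb T ?x) \<le> Hbar ?W (int N) ?x" for T
  proof (rule Hbar_ge)
    have p: "-1 < real h0 powr \<alpha>" using powr_ge_zero[of "real h0" \<alpha>] by linarith
    show "?x \<in> ?W \<union> line 0" using p by (simp add: What_def D0_def)
    show "?W \<union> line 0 \<subseteq> A'" using line0_What[of _ \<alpha> h0] by (auto simp: A'_def line_def)
    show "Zb \<subseteq> line (int N) - ?W" by (auto simp: Zb_def line_def)
    show "finite Zb" by (rule finZ)
    show "?x \<notin> Zb" using hH NH by (auto simp: Zb_def)
  qed
  have WWrec: "WW A' Zb (Suc T) y = nbsum (\<lambda>y'. if y' \<in> A' then 0 else (if y' \<in> Zb then 1 else 0) + WW A' Zb T y') y / 4" for T y
    by (rule WW_Suc[OF finZ])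
  have Vrec': "WW A' Zb (Suc T) y = nbsum (\<lambda>y'. if y' \<in> A' then c y' else c y' + WW A' Zb T y') y / 4" for T y
  proof -
    have "(\<lambda>y'. if y' \<in> A' then c y' else c y' + WW A' Zb T y') = (\<lambda>y'. if y' \<in> A' then 0 else (if y' \<in> Zb then 1 else 0) + WW A' Zb T y')"
      by (auto simp: c_def)
    thus ?thesis using WWrec by simp
  qed
  have closed: "y' \<in> D" if "y \<in> D" "y' \<in> nb y" "y' \<notin> A'" for y y'
  proof -
    have "snd y' \<noteq> 0" using that(3) line0_What[of y' \<alpha> h0] by (auto simp: A'_def)
    moreover have "snd y' \<noteq> 2 * int N" using that(3) by (auto simp: A'_def line_def)
    moreover have "snd y - 1 \<le> snd y'" "snd y' \<le> snd y + 1" using that(2) by (auto simp: nb_def)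
    ultimately show ?thesis using that by (auto simp: D_def A'_def)
  qed
  have bd1: "sq y \<le> Bd" if "y \<in> D" for y
    using that unfolding Bd_def D_def by (intro sq_nb_bound[OF a]) auto
  have bd2: "sq y' \<le> Bd" if "y \<in> D" "y' \<in> nb y" for y y'
  proof -
    have "snd y - 1 \<le> snd y'" "snd y' \<le> snd y + 1" using that(2) by (auto simp: nb_def)
    thus ?thesis using that unfolding Bd_def D_def by (intro sq_nb_bound[OF a, of y]) auto
  qed
  have fM: "f0 y \<le> real N" if "y \<in> D" for y
  proof -
    have "0 \<le> QQ \<alpha> h0 y" using that a by (intro QQ_nonneg) (auto simp: D_def)
    moreover have "mf y \<le> real N" unfolding mf_def by linarith
    ultimately show ?thesis by (simp add: f0_def)
  qed
  have sub: "f0 y \<le> nbsum (\<lambda>y'. if y' \<in> A' then c y' else c y' + f0 y') y / 4" if y: "y \<in> D" for y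
  proof -
    let ?ind = "\<lambda>y'. if snd y' = int N then 1 else (0::real)"
    let ?g = "\<lambda>y'. ?ind y' + mf y' - QQ \<alpha> h0 y'"
    have pt: "?g y' \<le> (if y' \<in> A' then c y' else c y' + f0 y') + 0 \<and> (\<lambda>_. 0) y' \<le> (if y' \<in> A' then c y' else c y' + f0 y') + 0" if y': "y' \<in> nb y" for y'
    proof -
      have s0: "0 \<le> snd y'" "snd y' \<le> 2 * int N" using y y' by (auto simp: D_def nb_def)
      have Q0: "0 \<le> QQ \<alpha> h0 y'" by (rule QQ_nonneg[OF a s0(1)])
      have mle: "mf y' \<le> real_of_int (snd y')" unfolding mf_def by linarith
      show ?thesis
      proof (cases "y' \<in> ?W")
        case True
        have "real_of_int (snd y') + 1 \<le> QQ \<alpha> h0 y'" by (rule What_QQ[OF a True s0(1)])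
        hence "?g y' \<le> 0" using mle by simp
        thus ?thesis using True by (simp add: c_def A'_def)
      next
        case nW: False
        show ?thesis
        proof (cases "y' \<in> A'")
          case True
          hence "snd y' = 2 * int N" using nW by (simp add: A'_def line_def)
          hence "?g y' \<le> 0" using Q0 N0 by (simp add: mf_def)
          thus ?thesis using True by (simp add: c_def)
        next
          case False
          have "?ind y' \<le> c y'"
          proof (cases "snd y' = int N")
            case True
            have "real_of_int \<bar>fst y'\<bar> \<le> Bx \<alpha> h0 (real_of_int (2 * int N))"
              using s0 nW by (intro bound_x1[OF a]) auto
            hence "\<bar>fst y'\<bar> \<le> Bz" unfolding Bz_def by linarith
            hence "y' \<in> Zb" using True nW by (simp add: Zb_def)
            thus ?thesis using False True by (simp add: c_def)
          qed (simp add: c_def)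
          moreover have "mf y' - QQ \<alpha> h0 y' \<le> f0 y'" by (simp add: f0_def)
          moreover have "0 \<le> c y'" "0 \<le> f0 y'" by (auto simp: c_def f0_def)
          ultimately show ?thesis using False by simp
        qed
      qed
    qed
    have A1: "nbsum ?g y \<le> nbsum (\<lambda>y'. if y' \<in> A' then c y' else c y' + f0 y') y + 4 * 0"
      using pt by (intro nbsum_mono) auto
    have "nbsum (\<lambda>_. 0) y \<le> nbsum (\<lambda>y'. if y' \<in> A' then c y' else c y' + f0 y') y + 4 * 0"
      using pt by (intro nbsum_mono) auto
    hence A2: "0 \<le> nbsum (\<lambda>y'. if y' \<in> A' then c y' else c y' + f0 y') y" by (simp add: nbsum_def)
    have A3: "4 * (mf y - QQ \<alpha> h0 y) \<le> nbsum ?g y"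
    proof -
      have "nbsum (QQ \<alpha> h0) y = 4 * QQ \<alpha> h0 y" using y a by (intro QQ_harm) (auto simp: D_def)
      moreover have "nbsum ?g y = nbsum (\<lambda>y'. ?ind y' + mf y') y - nbsum (QQ \<alpha> h0) y"
        by (simp add: nbsum_def)
      moreover have "4 * mf y \<le> nbsum (\<lambda>y'. ?ind y' + mf y') y"
        unfolding mf_def using y by (intro mid_ineq) (auto simp: D_def)
      ultimately show ?thesis by simp
    qed
    have "max 0 (mf y - QQ \<alpha> h0 y) \<le> nbsum (\<lambda>y'. if y' \<in> A' then c y' else c y' + f0 y') y / 4"
      by (rule maxhelp[OF A1 A2 A3])
    thus ?thesis by (simp add: f0_def)
  qed
  let ?y0 = "(0::int, H)"
  have y0: "?y0 \<in> D" using axis_notWhat[OF hH] hH NH by (auto simp: D_def)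
  have "\<exists>T. f0 ?y0 - \<eta> * Bd \<le> WW A' Zb T ?y0"
    by (rule test_fn2[where V="WW A' Zb" and c=c and Stop=A' and D=D and Bd=Bd and M="real N" and \<eta>=\<eta>])
       (fact Vrec' closed bd1 bd2 fM sub y0 eta | rule WW_nonneg)+
  then obtain T where T: "f0 ?y0 - \<eta> * Bd \<le> WW A' Zb T ?y0" by blast
  have "mf ?y0 = real_of_int H" using NH by (simp add: mf_def)
  hence "1 \<le> f0 ?y0" using QH by (simp add: f0_def)
  moreover have "\<eta> * Bd = 1 / 2" using Bd0 by (simp add: \<eta>_def)
  ultimately have u0: "1 / 2 \<le> WW A' Zb T ?y0" using T by simp
  define m where "m = nat (H - int h0)"
  have Hm: "H = int h0 + int m" using hH by (simp add: m_def)
  have "(1/4)^m * WW A' Zb T (0, int h0 + int m) \<le> WW A' Zb (T + m) (0, int h0)"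
  proof (rule V_climb[where A=A' and b="\<lambda>y. if y \<in> Zb then 1 else 0"])
    show "\<And>T y. WW A' Zb (Suc T) y = nbsum (\<lambda>y'. if y' \<in> A' then 0 else (if y' \<in> Zb then 1 else 0) + WW A' Zb T y') y / 4"
      by (rule WWrec)
    fix i assume i: "1 \<le> i" "i \<le> m"
    show "(0, int h0 + int i) \<notin> A'"
      using i axis_notWhat[of h0 "int h0 + int i" \<alpha>] Hm NH by (auto simp: A'_def line_def)
  qed (auto simp: WW_nonneg)
  hence "(1/4)^m * (1 / 2) \<le> WW A' Zb (T + m) ?x"
    using u0 Hm by (smt (verit) mult_left_mono zero_le_power zero_le_divide_1_iff)
  hence "ennreal ((1/4)^m / 2) \<le> ennreal (WW A' Zb (T + m) ?x)" by (intro ennreal_leI) simp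
  also have "\<dots> \<le> Hbar ?W (int N) ?x" by (rule Hb)
  finally show ?thesis by (simp add: m_def)
qed

theorem mainTheorem5:
  fixes \<alpha> :: real and h0 :: nat
  assumes "\<alpha> > 1"
  shows "\<exists>c>0.
    (\<forall>\<^sub>F k in sequentially. hit_before (0, int h0) (line (2 ^ k)) (What \<alpha> h0) \<ge> c * 2 powi (- int k)) \<and>
    (\<forall>\<^sub>F N in sequentially. Hbar (What \<alpha> h0) (int N) (0, int h0) \<ge> ennreal c)"
proof -
  have a: "\<alpha> > 1" by (rule assms)
  define q where "q = qq \<alpha>"
  have q: "1 < q" "q < 2" using qq_bounds[OF a] by (auto simp: q_def)
  define K where "K = 1 / (q - 1) + 4 * pi / (1 - q / 2)"
  have K0: "0 \<le> K" using q by (simp add: K_def)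
  obtain J where J: "q^J * K + (real h0 + 2) \<le> 2^J"
    using exists_J[OF q, of K "real h0 + 2"] by blast
  define H where "H = (2::int)^J"
  have QH: "QQ \<alpha> h0 (0, H) \<le> real_of_int H - 1"
  proof -
    have "GG q (0, 2^J) \<le> q^J * K" unfolding K_def by (rule GG_axis[OF q])
    thus ?thesis using J by (simp add: QQ_def H_def q_def)
  qed
  have hH: "int h0 < H"
  proof -
    have "0 \<le> q^J * K" using K0 q by simp
    hence "real h0 + 2 \<le> 2^J" using J by linarith
    hence "real h0 < real ((2::nat)^J)" by (simp only: of_nat_power of_nat_numeral)
    hence "h0 < 2^J" by (simp only: of_nat_less_iff)
    thus ?thesis by (simp add: H_def)
  qed
  define c where "c = (1/4::real)^(nat (H - int h0)) / 2"
  have c0: "0 < c" by (simp add: c_def)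
  have ev1: "\<forall>\<^sub>F k in sequentially. hit_before (0, int h0) (line (2 ^ k)) (What \<alpha> h0) \<ge> c * 2 powi (- int k)"
    unfolding eventually_sequentially
  proof (intro exI[of _ "Suc J"] allI impI)
    fix k assume k: "Suc J \<le> k"
    have "(2::int)^J < 2^k" using k by (intro power_strict_increasing) auto
    hence HR: "H < 2^k" by (simp add: H_def)
    have "c / real_of_int ((2::int)^k) \<le> hit_before (0, int h0) (line (2 ^ k)) (What \<alpha> h0)"
      using claim1[OF a QH hH HR] by (simp add: c_def)
    moreover have "c * 2 powi (- int k) = c / real_of_int ((2::int)^k)"
      by (simp add: power_int_minus field_simps)
    ultimately show "hit_before (0, int h0) (line (2 ^ k)) (What \<alpha> h0) \<ge> c * 2 powi (- int k)" by simp
  qed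
  have ev2: "\<forall>\<^sub>F N in sequentially. Hbar (What \<alpha> h0) (int N) (0, int h0) \<ge> ennreal c"
    unfolding eventually_sequentially
  proof (intro exI[of _ "Suc (nat H)"] allI impI)
    fix N assume "Suc (nat H) \<le> N"
    hence NH: "H < int N" using hH by linarith
    show "Hbar (What \<alpha> h0) (int N) (0, int h0) \<ge> ennreal c"
      using claim2[OF a QH hH NH] by (simp add: c_def)
  qed
  show ?thesis using c0 ev1 ev2 by blast
qed

end
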